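(* Let $\mathbf u:[0,T]\to(0,\infty)^N$ be a differentiable solution of the geometric flux-differencing scheme $\frac{d\mathbf u}{dt}+2WD\mathbf w=\mathbf 0$, where $w_i=\sqrt{a_iu_i}$, $W=\operatorname{diag}(\mathbf w)$, and let $\mathbf v:[0,T]\to\mathbb R^N$ solve the linearized equation $$\frac{d\mathbf v}{dt}+\operatorname{diag}(D\mathbf w)AW^{-1}\mathbf v+WDAW^{-1}\mathbf v=\mathbf 0,$$ with $\mathbf w=\mathbf w(t)$ built from $\mathbf u(t)$. Then $\mathbf z:=W^{-1}\mathbf v$ satisfies $\frac{d\mathbf z}{dt}+DA\mathbf z=\mathbf 0$, the quantity $\sum_iH_{ii}v_i^2/u_i$ is constant in time, and $$\|\mathbf v(t)\|_H^2\le\frac{\max_iu_i(t)}{\min_iu_i(0)}\,\|\mathbf v(0)\|_H^2\qquad\text{for all }t\in[0,T].$$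
   Context: $H=\operatorname{diag}(H_{ii})$, $H_{ii}>0$; $Q\in\mathbb R^{N\times N}$ with $Q+Q^T=0$; $D=H^{-1}Q$; $\mathbf a$ constant in time with $a_i>0$, $A=\operatorname{diag}(\mathbf a)$; $\|\mathbf v\|_H^2=\sum_iH_{ii}v_i^2$. *)

theory Defs
  imports "HOL-Analysis.Analysis"
begin

text \<open>Vectors in R^N are real^'n for a finite index type 'n. The diagonal matrices
H and A are represented by their diagonals (vectors H and a).\<close>

definition Dmat :: "real^'n \<Rightarrow> real^'n^'n \<Rightarrow> real^'n^'n" where
  "Dmat H Q = (\<chi> i j. Q $ i $ j / H $ i)"

definition wvec :: "real^'n \<Rightarrow> real^'n \<Rightarrow> real^'n" where
  "wvec a u = (\<chi> i. sqrt (a $ i * u $ i))"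

definition Hnorm2 :: "real^'n \<Rightarrow> real^'n \<Rightarrow> real" where
  "Hnorm2 H v = (\<Sum>i\<in>UNIV. H $ i * (v $ i)^2)"

end

theory Submission
  imports Defs
begin

lemma vec_vderiv_iff:
  fixes f :: "real \<Rightarrow> real^'n"
  shows "(f has_vector_derivative f') (at t within S) \<longleftrightarrow>
    (\<forall>i. ((\<lambda>x. f x $ i) has_vector_derivative f' $ i) (at t within S))"
  unfolding has_vector_derivative_def
  apply (subst has_derivative_componentwise_within)
  apply (auto simp: Basis_vec_def inner_axis)
  done

lemma skew_sum_zero:
  fixes Q :: "real^'n^'n" and y :: "real^'n"
  assumes "\<And>i j. Q $ i $ j + Q $ j $ i = 0"
  shows "(\<Sum>i\<in>UNIV. y $ i * (\<Sum>j\<in>UNIV. Q $ i $ j * y $ j)) = 0"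
proof -
  let ?S = "(\<Sum>i\<in>UNIV. \<Sum>j\<in>UNIV. y $ i * Q $ i $ j * y $ j)"
  have e1: "(\<Sum>i\<in>UNIV. y $ i * (\<Sum>j\<in>UNIV. Q $ i $ j * y $ j)) = ?S"
    by (simp add: sum_distrib_left mult.assoc)
  have "?S = (\<Sum>j\<in>UNIV. \<Sum>i\<in>UNIV. y $ i * Q $ i $ j * y $ j)"
    by (rule sum.swap)
  also have "\<dots> = (\<Sum>j\<in>UNIV. \<Sum>i\<in>UNIV. - (y $ j * Q $ j $ i * y $ i))"
  proof (intro sum.cong refl)
    fix j i
    have "Q $ i $ j = - Q $ j $ i" using assms[of i j] by linarith
    then show "y $ i * Q $ i $ j * y $ j = - (y $ j * Q $ j $ i * y $ i)" by simp
  qed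
  also have "\<dots> = - ?S" by (simp add: sum_negf)
  finally have "?S = 0" by linarith
  with e1 show ?thesis by simp
qed

theorem mainTheorem6:
  fixes H a :: "real^'n" and Q :: "real^'n^'n" and T :: real
    and u v :: "real \<Rightarrow> real^'n"
  assumes H_pos: "\<And>i. H $ i > 0"
    and Q_skew: "\<And>i j. Q $ i $ j + Q $ j $ i = 0"
    and a_pos: "\<And>i. a $ i > 0"
    and u_pos: "\<And>t i. t \<in> {0..T} \<Longrightarrow> u t $ i > 0"
    and u_ode: "\<And>t. t \<in> {0..T} \<Longrightarrow>
       (u has_vector_derivative
          (- (\<chi> i. 2 * wvec a (u t) $ i * (Dmat H Q *v wvec a (u t)) $ i))) (at t within {0..T})"
    and v_ode: "\<And>t. t \<in> {0..T} \<Longrightarrow>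
       (v has_vector_derivative
          (- (\<chi> i. (Dmat H Q *v wvec a (u t)) $ i * a $ i * v t $ i / wvec a (u t) $ i
                  + wvec a (u t) $ i *
                    (Dmat H Q *v (\<chi> j. a $ j * v t $ j / wvec a (u t) $ j)) $ i)))
        (at t within {0..T})"
  defines "z \<equiv> (\<lambda>t. \<chi> i. v t $ i / wvec a (u t) $ i)"
  shows "(\<forall>t\<in>{0..T}. (z has_vector_derivative
              (- (Dmat H Q *v (\<chi> j. a $ j * z t $ j)))) (at t within {0..T}))
       \<and> (\<forall>t\<in>{0..T}. (\<Sum>i\<in>UNIV. H $ i * (v t $ i)^2 / u t $ i)
                       = (\<Sum>i\<in>UNIV. H $ i * (v 0 $ i)^2 / u 0 $ i))
       \<and> (\<forall>t\<in>{0..T}. Hnorm2 H (v t)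
              \<le> (Max (range (\<lambda>i. u t $ i)) / Min (range (\<lambda>i. u 0 $ i))) * Hnorm2 H (v 0))"
proof -
  define S where "S = {0..T}"
  define D where "D = Dmat H Q"
  define w where "w = (\<lambda>t. wvec a (u t))"
  have w_eq: "w t $ i = sqrt (a $ i * u t $ i)" for t i by (simp add: w_def wvec_def)
  have w_pos: "w t $ i > 0" if "t \<in> S" for t i
    using a_pos u_pos that by (simp add: w_eq S_def)
  have z_eq: "z t $ i = v t $ i / w t $ i" for t i by (simp add: z_def w_def)
  have dz: "((\<lambda>s. z s $ i) has_real_derivative - (D *v (\<chi> j. a $ j * z t $ j)) $ i) (at t within S)"
    if t: "t \<in> S" for t i
  proof -
    have du: "((\<lambda>s. u s $ i) has_real_derivative - (2 * w t $ i * (D *v w t) $ i)) (at t within S)"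
      using u_ode[of t] t unfolding S_def has_real_derivative_iff_has_vector_derivative vec_vderiv_iff
      by (simp add: D_def w_def)
    have dv: "((\<lambda>s. v s $ i) has_real_derivative - ((D *v w t) $ i * a $ i * v t $ i / w t $ i
                  + w t $ i * (D *v (\<chi> j. a $ j * v t $ j / w t $ j)) $ i)) (at t within S)"
      using v_ode[of t] t unfolding S_def has_real_derivative_iff_has_vector_derivative vec_vderiv_iff
      by (simp add: D_def w_def)
    have ap: "a $ i * u t $ i > 0" using a_pos u_pos t by (simp add: S_def)
    have dw0: "((\<lambda>s. sqrt (a $ i * u s $ i)) has_real_derivative
        inverse (sqrt (a $ i * u t $ i)) / 2 * (a $ i * - (2 * w t $ i * (D *v w t) $ i))) (at t within S)"
      using DERIV_chain2[OF DERIV_real_sqrt[OF ap] DERIV_cmult[OF du, of "a $ i"]] by simp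
    have ew: "inverse (sqrt (a $ i * u t $ i)) / 2 * (a $ i * - (2 * w t $ i * (D *v w t) $ i))
          = - (a $ i * (D *v w t) $ i)"
      using w_pos[OF t, of i] by (simp add: w_eq[symmetric] field_simps)
    have dw1: "((\<lambda>s. sqrt (a $ i * u s $ i)) has_real_derivative - (a $ i * (D *v w t) $ i)) (at t within S)"
      using dw0 unfolding ew .
    have dw: "((\<lambda>s. w s $ i) has_real_derivative - (a $ i * (D *v w t) $ i)) (at t within S)"
      unfolding w_eq by (rule dw1)
    note dz0 = DERIV_divide[OF dv dw, OF less_imp_neq[OF w_pos[OF t, of i], symmetric]]
    have zc: "(\<chi> j. a $ j * z t $ j) = (\<chi> j. a $ j * v t $ j / w t $ j)"
      by (simp add: z_eq)
    have alg: "\<And>P X A V (W::real). W > 0 \<Longrightarrow>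
       (- (P * A * V / W + W * X) * W - V * - (A * P)) / (W * W) = - X"
      by (simp add: field_simps)
    have "((\<lambda>s. v s $ i / w s $ i) has_real_derivative - (D *v (\<chi> j. a $ j * z t $ j)) $ i) (at t within S)"
      using dz0 unfolding zc alg[OF w_pos[OF t, of i]] .
    then show ?thesis unfolding z_eq .
  qed
  define y where "y = (\<lambda>t. \<chi> j. a $ j * z t $ j)"
  have P1: "\<forall>t\<in>{0..T}. (z has_vector_derivative
              (- (Dmat H Q *v (\<chi> j. a $ j * z t $ j)))) (at t within {0..T})"
  proof
    fix t assume t: "t \<in> {0..T}"
    show "(z has_vector_derivative (- (Dmat H Q *v (\<chi> j. a $ j * z t $ j)))) (at t within {0..T})"
      unfolding vec_vderiv_iff
      using dz[of t] t by (simp add: S_def D_def has_real_derivative_iff_has_vector_derivative)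
  qed
  define F where "F = (\<lambda>t. \<Sum>i\<in>UNIV. H $ i * a $ i * (z t $ i)^2)"
  have eqF: "(\<Sum>i\<in>UNIV. H $ i * (v t $ i)^2 / u t $ i) = F t" if t: "t \<in> S" for t
    unfolding F_def
  proof (intro sum.cong refl)
    fix i
    have ap: "a $ i * u t $ i > 0" using a_pos u_pos t by (simp add: S_def)
    have w2: "(w t $ i)^2 = a $ i * u t $ i" using ap by (simp add: w_eq)
    have up: "u t $ i > 0" using u_pos t by (simp add: S_def)
    show "H $ i * (v t $ i)^2 / u t $ i = H $ i * a $ i * (z t $ i)^2"
      unfolding z_eq power_divide w2 using up a_pos[of i] by (simp add: field_simps)
  qed
  have dF: "(F has_real_derivative 0) (at t within S)" if t: "t \<in> S" for t
  proof -
    have "(F has_real_derivative (\<Sum>i\<in>UNIV. H $ i * a $ i * (2 * z t $ i * (- (D *v y t) $ i))))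
          (at t within S)"
      unfolding F_def y_def
      by (auto intro!: derivative_eq_intros dz[OF t] sum.cong simp: power2_eq_square algebra_simps)
    moreover have "(\<Sum>i\<in>UNIV. H $ i * a $ i * (2 * z t $ i * (- (D *v y t) $ i))) = 0"
    proof -
      have "(\<Sum>i\<in>UNIV. H $ i * a $ i * (2 * z t $ i * (- (D *v y t) $ i)))
          = (\<Sum>i\<in>UNIV. - 2 * (y t $ i * (\<Sum>j\<in>UNIV. Q $ i $ j * y t $ j)))"
      proof (intro sum.cong refl)
        fix i
        have "H $ i * (D *v y t) $ i = (\<Sum>j\<in>UNIV. Q $ i $ j * y t $ j)"
          using H_pos[of i]
          by (simp add: D_def Dmat_def matrix_vector_mult_def sum_distrib_left)
        then show "H $ i * a $ i * (2 * z t $ i * - (D *v y t) $ i) =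
            - 2 * (y t $ i * (\<Sum>j\<in>UNIV. Q $ i $ j * y t $ j))"
          by (simp add: y_def algebra_simps)
      qed
      also have "\<dots> = - 2 * (\<Sum>i\<in>UNIV. y t $ i * (\<Sum>j\<in>UNIV. Q $ i $ j * y t $ j))"
        by (rule sum_distrib_left[symmetric])
      finally have "(\<Sum>i\<in>UNIV. H $ i * a $ i * (2 * z t $ i * (- (D *v y t) $ i)))
          = - 2 * (\<Sum>i\<in>UNIV. y t $ i * (\<Sum>j\<in>UNIV. Q $ i $ j * y t $ j))" .
      then show ?thesis using skew_sum_zero[OF Q_skew, of "y t"] by simp
    qed
    ultimately show ?thesis by simp
  qed
  obtain c where c: "\<forall>t\<in>S. F t = c"
    using has_field_derivative_zero_constant[of S F] dF by (auto simp: S_def)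
  have P2: "\<forall>t\<in>{0..T}. (\<Sum>i\<in>UNIV. H $ i * (v t $ i)^2 / u t $ i)
                       = (\<Sum>i\<in>UNIV. H $ i * (v 0 $ i)^2 / u 0 $ i)"
  proof
    fix t assume t: "t \<in> {0..T}"
    then have z0: "0 \<in> S" by (simp add: S_def)
    show "(\<Sum>i\<in>UNIV. H $ i * (v t $ i)^2 / u t $ i) = (\<Sum>i\<in>UNIV. H $ i * (v 0 $ i)^2 / u 0 $ i)"
      using eqF[of t] eqF[OF z0] c z0 t by (simp add: S_def)
  qed
  have P3: "\<forall>t\<in>{0..T}. Hnorm2 H (v t)
              \<le> (Max (range (\<lambda>i. u t $ i)) / Min (range (\<lambda>i. u 0 $ i))) * Hnorm2 H (v 0)"
  proof
    fix t assume t: "t \<in> {0..T}"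
    then have t0: "0 \<in> {0..T}" by simp
    define M where "M = Max (range (\<lambda>i. u t $ i))"
    define m where "m = Min (range (\<lambda>i. u 0 $ i))"
    have Mge: "u t $ i \<le> M" for i unfolding M_def by (rule Max_ge) auto
    have mle: "m \<le> u 0 $ i" for i unfolding m_def by (rule Min_le) auto
    have "m \<in> range (\<lambda>i. u 0 $ i)" unfolding m_def by (rule Min_in) auto
    then have mpos: "m > 0" using u_pos[OF t0] by auto
    have Mpos: "M \<ge> 0" using Mge[of undefined] u_pos[OF t, of undefined] by linarith
    have "Hnorm2 H (v t) = (\<Sum>i\<in>UNIV. (H $ i * (v t $ i)^2 / u t $ i) * u t $ i)"
      unfolding Hnorm2_def
    proof (intro sum.cong refl)
      fix i show "H $ i * (v t $ i)^2 = H $ i * (v t $ i)^2 / u t $ i * u t $ i"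
        using u_pos[OF t, of i] by simp
    qed
    also have "\<dots> \<le> (\<Sum>i\<in>UNIV. (H $ i * (v t $ i)^2 / u t $ i) * M)"
    proof (intro sum_mono mult_left_mono)
      fix i
      show "u t $ i \<le> M" by (rule Mge)
      have "0 \<le> H $ i * (v t $ i)^2" using H_pos[of i] by simp
      then show "0 \<le> H $ i * (v t $ i)^2 / u t $ i" using u_pos[OF t, of i] by simp
    qed
    also have "\<dots> = M * (\<Sum>i\<in>UNIV. H $ i * (v 0 $ i)^2 / u 0 $ i)"
    proof -
      have "(\<Sum>i\<in>UNIV. (H $ i * (v t $ i)^2 / u t $ i) * M) = M * (\<Sum>i\<in>UNIV. H $ i * (v t $ i)^2 / u t $ i)"
        unfolding sum_distrib_left by (intro sum.cong refl) (rule mult.commute)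
      then show ?thesis unfolding P2[rule_format, OF t] .
    qed
    also have "\<dots> \<le> M * (\<Sum>i\<in>UNIV. H $ i * (v 0 $ i)^2 / m)"
    proof (intro mult_left_mono sum_mono Mpos)
      fix i
      show "H $ i * (v 0 $ i)^2 / u 0 $ i \<le> H $ i * (v 0 $ i)^2 / m"
      proof (rule divide_left_mono)
        show "0 \<le> H $ i * (v 0 $ i)^2" using H_pos[of i] by simp
        show "m \<le> u 0 $ i" by (rule mle)
        show "0 < u 0 $ i * m" using mpos u_pos[OF t0, of i] by simp
      qed
    qed
    also have "\<dots> = (M / m) * Hnorm2 H (v 0)"
      unfolding Hnorm2_def by (simp add: sum_divide_distrib[symmetric])
    finally show "Hnorm2 H (v t) \<le> (Max (range (\<lambda>i. u t $ i)) / Min (range (\<lambda>i. u 0 $ i))) * Hnorm2 H (v 0)"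
      unfolding M_def m_def .
  qed
  show ?thesis using P1 P2 P3 by blast
qed

end
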